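(* Let $\mathbf{M}\in\mathbb{R}^{n\times n}$ be a symmetric positive definite matrix, let $\boldsymbol{\varphi}\in\mathbb{R}^n$, and let $\mathbf{H}=(H_1,\dots,H_m)^\intercal:\mathbb{R}^n\to\mathbb{R}^m$ be differentiable at $\boldsymbol{\varphi}$, with Jacobian $\nabla\mathbf{H}(\boldsymbol{\varphi})\in\mathbb{R}^{m\times n}$ whose $i$-th row is $\nabla H_i(\boldsymbol{\varphi})$. Fix an index $k\in\{1,\dots,m\}$ and let $\mathbf{H}^{-k}:\mathbb{R}^n\to\mathbb{R}^{m-1}$ denote $\mathbf{H}$ with its $k$-th component removed. Suppose $(\Delta\boldsymbol{\varphi},\Delta\boldsymbol{\gamma})\in\mathbb{R}^n\times\mathbb{R}^m$ solves $$\mathbf{M}\Delta\boldsymbol{\varphi}=\nabla\mathbf{H}(\boldsymbol{\varphi})^\intercal\Delta\boldsymbol{\gamma},\qquad \mathbf{H}(\boldsymbol{\varphi})+\nabla\mathbf{H}(\boldsymbol{\varphi})\Delta\boldsymbol{\varphi}=0,$$ and $(\Delta\tilde{\boldsymbol{\varphi}},\Delta\tilde{\boldsymbol{\gamma}})\in\mathbb{R}^n\times\mathbb{R}^{m-1}$ solves $$\mathbf{M}\Delta\tilde{\boldsymbol{\varphi}}=\nabla\mathbf{H}^{-k}(\boldsymbol{\varphi})^\intercal\Delta\tilde{\boldsymbol{\gamma}},\qquad \mathbf{H}^{-k}(\boldsymbol{\varphi})+\nabla\mathbf{H}^{-k}(\boldsymbol{\varphi})\Delta\tilde{\boldsymbol{\varphi}}=0.$$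 Then, with $\Delta\gamma_k$ the $k$-th component of $\Delta\boldsymbol{\gamma}$, $$\Delta\gamma_k\cdot\bigl(H_k(\boldsymbol{\varphi})+\nabla H_k(\boldsymbol{\varphi})\Delta\tilde{\boldsymbol{\varphi}}\bigr)\le 0.$$
   Context: The second system is obtained from the first by removing the $k$-th linearized constraint $H_k(\boldsymbol{\varphi})+\nabla H_k(\boldsymbol{\varphi})\Delta\boldsymbol{\varphi}=0$ (and its multiplier); $\Delta\boldsymbol{\gamma}$ are the Lagrange multipliers of the constraints in the first system. In the paper $\mathbf{M}$ is a mass matrix, hence symmetric positive definite. *)

theory Defs
  imports "HOL-Analysis.Analysis"
begin

definition sym_pos_def_matrix :: "real ^'n ^'n \<Rightarrow> bool" where
  "sym_pos_def_matrix M \<longleftrightarrow> transpose M = M \<and> (\<forall>x. x \<noteq> 0 \<longrightarrow> x \<bullet> (M *v x) > 0)"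

end

theory Submission
  imports Defs
begin

theorem mainTheorem1:
  fixes M :: "real ^'n ^'n"
    and \<phi> :: "real ^'n"
    and H :: "nat \<Rightarrow> real ^'n \<Rightarrow> real"
    and G :: "nat \<Rightarrow> real ^'n"
    and m k :: nat
    and d\<phi> dt\<phi> :: "real ^'n"
    and d\<gamma> dt\<gamma> :: "nat \<Rightarrow> real"
  assumes M: "sym_pos_def_matrix M"
    and H_diff: "\<And>i. i < m \<Longrightarrow> (H i has_derivative (\<lambda>v. G i \<bullet> v)) (at \<phi>)"
    and k: "k < m"
    and sys1_a: "M *v d\<phi> = (\<Sum>i<m. d\<gamma> i *\<^sub>R G i)"
    and sys1_b: "\<And>i. i < m \<Longrightarrow> H i \<phi> + G i \<bullet> d\<phi> = 0"
    and sys2_a: "M *v dt\<phi> = (\<Sum>i\<in>{..<m} - {k}. dt\<gamma> i *\<^sub>R G i)"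
    and sys2_b: "\<And>i. i < m \<Longrightarrow> i \<noteq> k \<Longrightarrow> H i \<phi> + G i \<bullet> dt\<phi> = 0"
  shows "d\<gamma> k * (H k \<phi> + G k \<bullet> dt\<phi>) \<le> 0"
proof -
  define e where "e = d\<phi> - dt\<phi>"
  have pos: "e \<bullet> (M *v e) \<ge> 0"
    using M unfolding sym_pos_def_matrix_def
    by (cases "e = 0") (auto intro: less_imp_le)
  have orth: "G i \<bullet> e = 0" if "i < m" "i \<noteq> k" for i
    using sys1_b[of i] sys2_b[of i] that by (simp add: e_def inner_diff_right)
  have "M *v e = M *v d\<phi> - M *v dt\<phi>"
    by (simp add: e_def matrix_vector_mult_diff_distrib)
  hence "e \<bullet> (M *v e) = (\<Sum>i<m. d\<gamma> i * (e \<bullet> G i)) - (\<Sum>i\<in>{..<m} - {k}. dt\<gamma> i * (e \<bullet> G i))"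
    by (simp add: sys1_a sys2_a inner_diff_right inner_sum_right)
  also have "(\<Sum>i\<in>{..<m} - {k}. dt\<gamma> i * (e \<bullet> G i)) = 0"
    using orth by (simp add: inner_commute)
  also have "(\<Sum>i<m. d\<gamma> i * (e \<bullet> G i)) = d\<gamma> k * (e \<bullet> G k) + (\<Sum>i\<in>{..<m} - {k}. d\<gamma> i * (e \<bullet> G i))"
    using k by (simp add: sum.remove)
  also have "(\<Sum>i\<in>{..<m} - {k}. d\<gamma> i * (e \<bullet> G i)) = 0"
    using orth by (simp add: inner_commute)
  finally have "e \<bullet> (M *v e) = d\<gamma> k * (e \<bullet> G k)" by simp
  moreover have "e \<bullet> G k = - (H k \<phi> + G k \<bullet> dt\<phi>)"
    using sys1_b[OF k] by (simp add: e_def inner_diff_right inner_commute algebra_simps)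
  ultimately show ?thesis using pos by (simp add: algebra_simps)
qed

end
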